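(* For the concurrent stepped-wedge design with $m$ interventions and $T\ge3$ periods (described in the context), suppose $2+b-bT\neq0$ and $3+b-2bT\ne 0$ and the relevant matrix is invertible. Then the matrix $\mathbf H$ satisfying $\mathrm E(\hat\theta)=\mathbf H\delta$ (when $\mathrm E(\bar{\mathbf y}_i)=\beta+\mathbf Z_i\delta$) is $$\mathbf H=\Big[\tfrac1c\big(\mathbf I_m+\tfrac dg\mathbf J_m\big)\Big]\otimes\mathbf r'-\tfrac1g\,\mathbf J_m\otimes\mathbf v',$$ where $\otimes$ is the Kronecker product and $\mathbf J_m$ the $m\times m$ all-ones matrix. Consequently, for each $k=1,\dots,m$, $$\mathrm E(\hat\theta_k)=\frac1c\mathbf r'\delta_k+\frac1g\Big(\frac dc\mathbf r'-\mathbf v'\Big)\delta_*,\qquad \delta_*=\sum_{k=1}^m\delta_k .$$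
   Context: Setting: a stepped-wedge trial with $T$ periods, $m$ interventions and a common cluster-period size $n$. The concurrent design has $I=m(T-1)$ clusters; cluster $i$ with $(k-1)(T-1)+1\le i\le k(T-1)$ receives only intervention $k$, and with $l=i-(k-1)(T-1)\in\{1,\dots,T-1\}$ it has $x_{kij}=1$ iff $j>l$ (and $x_{k'ij}=0$ for $k'\ne k$). Exposure time $e_{kij}=\sum_{j'\le j}x_{kij'}$. $\mathbf X_i$ is the $T\times m$ matrix with $(j,k)$ entry $x_{kij}$; $\mathbf Z_{k,i}$ is the $T\times(T-1)$ matrix with $(j,e)$ entry $1$ if $e_{kij}=e$ and $0$ otherwise; $\mathbf Z_i=(\mathbf Z_{1,i},\dots,\mathbf Z_{m,i})$. $\delta=(\delta_1',\dots,\delta_m')'$, $\delta_k=(\delta_{k,1},\dots,\delta_{k,T-1})'$. $\bar{\mathbf y}_i\in\mathbb R^T$ are cluster-period means with $\mathrm{Cov}(\bar{\mathbf y}_i)=\Sigma=\sigma_\alpha^2\mathbf 1\mathbf 1'+(\sigma_\epsilon^2/n)\mathbf I_T$. $\hat\theta=(\hat\theta_1,\dots,\hat\theta_m)'$ is the GLS estimator (known $\Sigma$) of $\theta$ in the working model $\bar{\mathbf y}_i=\beta+\mathbf X_i\theta+\mathbf 1\alpha_i+\bar\epsilon_i$ with unrestricted period effects $\beta\in\mathbb R^T$. Constants: $b=\sigma_\alpha^2/(T\sigma_\alpha^2+\sigma_\epsilon^2/n)$, $c=T(T-1)(3+b-2bT)/6$, $d=T[4T-2-3bT(T-1)]/(12m)$,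 $g=c-md=T(T-2)(2+b-bT)/12$. $\mathbf r,\mathbf v\in\mathbb R^{T-1}$ with $r_j=(T-j)[1+b(1-T-j)/2]$ and $v_j=(T-j)[1-bT+j/(T-1)]/(2m)$, $j=1,\dots,T-1$. *)

theory Defs
  imports "Jordan_Normal_Form.Matrix"
begin

(* Indices in the paper are 1-based: interventions k, clusters i, periods j, exposure e.
   JNF matrices/vectors are 0-based: row j0 <-> period j0+1, column k0 <-> intervention k0+1,
   column k0*(T-1)+e0 of Z_i / entry of delta <-> delta_{k0+1, e0+1}. *)

definition xind :: "nat \<Rightarrow> nat \<Rightarrow> nat \<Rightarrow> nat \<Rightarrow> nat" where
  "xind T k i j = (if (k - 1) * (T - 1) < i \<and> i \<le> k * (T - 1) \<and> i - (k - 1) * (T - 1) < j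
                   then 1 else 0)"

definition expo :: "nat \<Rightarrow> nat \<Rightarrow> nat \<Rightarrow> nat \<Rightarrow> nat" where
  "expo T k i j = (\<Sum>j'\<in>{1..j}. xind T k i j')"

definition Xmat :: "nat \<Rightarrow> nat \<Rightarrow> nat \<Rightarrow> real mat" where
  "Xmat T m i = mat T m (\<lambda>(j, k). real (xind T (k + 1) i (j + 1)))"

definition Zmat :: "nat \<Rightarrow> nat \<Rightarrow> nat \<Rightarrow> real mat" where
  "Zmat T m i = mat T (m * (T - 1))
     (\<lambda>(j, c). if expo T (c div (T - 1) + 1) i (j + 1) = c mod (T - 1) + 1 then 1 else 0)"

definition Sigma :: "nat \<Rightarrow> nat \<Rightarrow> real \<Rightarrow> real \<Rightarrow> real mat" where
  "Sigma T n sa2 se2 = mat T T (\<lambda>(j, j'). sa2 + (if j = j' then se2 / real n else 0))"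

(* design matrix of the working model for cluster i: (I_T | X_i), parameters (beta, theta) *)
definition Dmat :: "nat \<Rightarrow> nat \<Rightarrow> nat \<Rightarrow> real mat" where
  "Dmat T m i = mat T (T + m)
     (\<lambda>(j, c). if c < T then (if j = c then 1 else 0) else Xmat T m i $$ (j, c - T))"

definition mat_inv :: "real mat \<Rightarrow> real mat" where
  "mat_inv A = (SOME B. B \<in> carrier_mat (dim_row A) (dim_row A) \<and>
                        A * B = 1\<^sub>m (dim_row A) \<and> B * A = 1\<^sub>m (dim_row A))"

(* GLS information matrix  sum_i D_i' Sigma^{-1} D_i  (the "relevant matrix") *)
definition info_mat :: "nat \<Rightarrow> nat \<Rightarrow> nat \<Rightarrow> real \<Rightarrow> real \<Rightarrow> real mat" where
  "info_mat T m n sa2 se2 = mat (T + m) (T + m) (\<lambda>(a, a').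
     \<Sum>i\<in>{1..m * (T - 1)}.
       (transpose_mat (Dmat T m i) * mat_inv (Sigma T n sa2 se2) * Dmat T m i) $$ (a, a'))"

(* GLS estimator (known Sigma) of (beta, theta) from cluster-period means y_i, i = 1..I *)
definition gls_full :: "nat \<Rightarrow> nat \<Rightarrow> nat \<Rightarrow> real \<Rightarrow> real \<Rightarrow> (nat \<Rightarrow> real vec) \<Rightarrow> real vec" where
  "gls_full T m n sa2 se2 y = mat_inv (info_mat T m n sa2 se2) *\<^sub>v
     vec (T + m) (\<lambda>a. \<Sum>i\<in>{1..m * (T - 1)}.
       (transpose_mat (Dmat T m i) *\<^sub>v (mat_inv (Sigma T n sa2 se2) *\<^sub>v y i)) $ a)"

definition theta_hat :: "nat \<Rightarrow> nat \<Rightarrow> nat \<Rightarrow> real \<Rightarrow> real \<Rightarrow> (nat \<Rightarrow> real vec) \<Rightarrow> real vec" where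
  "theta_hat T m n sa2 se2 y = vec m (\<lambda>k. gls_full T m n sa2 se2 y $ (T + k))"

definition bconst :: "nat \<Rightarrow> nat \<Rightarrow> real \<Rightarrow> real \<Rightarrow> real" where
  "bconst T n sa2 se2 = sa2 / (real T * sa2 + se2 / real n)"

definition cconst :: "nat \<Rightarrow> real \<Rightarrow> real" where
  "cconst T b = real T * (real T - 1) * (3 + b - 2 * b * real T) / 6"

definition dconst :: "nat \<Rightarrow> nat \<Rightarrow> real \<Rightarrow> real" where
  "dconst T m b = real T * (4 * real T - 2 - 3 * b * real T * (real T - 1)) / (12 * real m)"

definition gconst :: "nat \<Rightarrow> nat \<Rightarrow> real \<Rightarrow> real" where
  "gconst T m b = cconst T b - real m * dconst T m b"

definition rvec :: "nat \<Rightarrow> real \<Rightarrow> nat \<Rightarrow> real" where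
  "rvec T b j = (real T - real j) * (1 + b * (1 - real T - real j) / 2)"

definition vvec :: "nat \<Rightarrow> nat \<Rightarrow> real \<Rightarrow> nat \<Rightarrow> real" where
  "vvec T m b j = (real T - real j) * (1 - b * real T + real j / (real T - 1)) / (2 * real m)"

definition kron :: "real mat \<Rightarrow> real mat \<Rightarrow> real mat" where
  "kron A B = mat (dim_row A * dim_row B) (dim_col A * dim_col B)
     (\<lambda>(i, j). A $$ (i div dim_row B, j div dim_col B) * B $$ (i mod dim_row B, j mod dim_col B))"

definition Jmat :: "nat \<Rightarrow> real mat" where
  "Jmat m = mat m m (\<lambda>_. 1)"

definition rrow :: "nat \<Rightarrow> real \<Rightarrow> real mat" where
  "rrow T b = mat 1 (T - 1) (\<lambda>(_, e). rvec T b (e + 1))"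

definition vrow :: "nat \<Rightarrow> nat \<Rightarrow> real \<Rightarrow> real mat" where
  "vrow T m b = mat 1 (T - 1) (\<lambda>(_, e). vvec T m b (e + 1))"

definition Hclaim :: "nat \<Rightarrow> nat \<Rightarrow> real \<Rightarrow> real mat" where
  "Hclaim T m b =
     kron ((1 / cconst T b) \<cdot>\<^sub>m (1\<^sub>m m + (dconst T m b / gconst T m b) \<cdot>\<^sub>m Jmat m)) (rrow T b)
     - kron ((1 / gconst T m b) \<cdot>\<^sub>m Jmat m) (vrow T m b)"

end

theory Submission
  imports Defs
begin

lemma S1: "(\<Sum>j<n. real j) = real n * (real n - 1) / 2"
  by (induction n) (auto simp: field_simps)

lemma S2: "(\<Sum>j<n. real j ^ 2) = (real n - 1) * real n * (2 * real n - 1) / 6"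
  by (induction n) (auto simp: field_simps power2_eq_square)

lemma S0: "(\<Sum>j<n. (c::real)) = real n * c" by simp

lemma cnt_lt: "j \<le> M \<Longrightarrow> (\<Sum>l<M. if l < j then (1::real) else 0) = real j"
proof -
  assume "j \<le> M"
  then have "{..<M} \<inter> {l. l < j} = {..<j}" by auto
  then show ?thesis by (simp add: sum.If_cases)
qed

lemma split_gt: "l < T \<Longrightarrow> (\<Sum>j<T. if l < j then h j else 0) = (\<Sum>j<T. h j) - (\<Sum>j<Suc l. (h j::real))"
proof -
  assume "l < T"
  have a: "{..<T} \<inter> {j. l < j} = {Suc l..<T}" by auto
  have b: "{..<T} = {..<Suc l} \<union> {Suc l..<T}" using \<open>l<T\<close> by auto
  have "(\<Sum>j<T. h j) = (\<Sum>j<Suc l. h j) + (\<Sum>j\<in>{Suc l..<T}. h j)"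
    by (subst b, rule sum.union_disjoint) auto
  then show ?thesis by (simp add: sum.If_cases a)
qed

lemma shift_lt: "(\<Sum>l<M. if l + e + 1 < T then f l else 0) = (\<Sum>l<min M (T - Suc e). (f l::real))"
proof -
  have "{..<M} \<inter> {l. l + e + 1 < T} = {..<min M (T - Suc e)}" by auto
  then show ?thesis by (simp add: sum.If_cases)
qed

definition kap :: "nat \<Rightarrow> nat \<Rightarrow> real \<Rightarrow> real" where
  "kap T m b = 1 / (real m * (real T - 1) * gconst T m b)"
definition tau :: "nat \<Rightarrow> nat \<Rightarrow> real \<Rightarrow> nat \<Rightarrow> nat \<Rightarrow> real" where
  "tau T m b k kk = (if kk = k then 1 / cconst T b else 0) + dconst T m b / (cconst T b * gconst T m b)"
definition Uf :: "nat \<Rightarrow> nat \<Rightarrow> real \<Rightarrow> nat \<Rightarrow> real" where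
  "Uf T m b j = - kap T m b * real j"
definition Qf :: "nat \<Rightarrow> nat \<Rightarrow> real \<Rightarrow> nat \<Rightarrow> nat \<Rightarrow> nat \<Rightarrow> nat \<Rightarrow> real" where
  "Qf T m b k kk l j = Uf T m b j + tau T m b k kk * (if l < j then 1 else 0)
     - b * (\<Sum>j'<T. Uf T m b j' + tau T m b k kk * (if l < j' then 1 else 0))"

lemma cnt_gt: "l < T \<Longrightarrow> (\<Sum>j<T. if l < j then (1::real) else 0) = real T - 1 - real l"
  using split_gt[of l T "\<lambda>_. 1"] by simp

lemma Qf_closed: assumes "l < T"
  shows "Qf T m b k kk l j = - kap T m b * real j + tau T m b k kk * (if l < j then 1 else 0)
     + b * kap T m b * real T * (real T - 1) / 2 - b * tau T m b k kk * (real T - 1) + b * tau T m b k kk * real l"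
proof -
  have "(\<Sum>j'<T. Uf T m b j' + tau T m b k kk * (if l < j' then 1 else 0))
     = - kap T m b * (real T * (real T - 1) / 2) + tau T m b k kk * (real T - 1 - real l)"
  proof -
    have hs1: "(\<Sum>j'<T. Uf T m b j') = - kap T m b * (real T * (real T - 1) / 2)"
      by (simp add: Uf_def sum_negf sum_distrib_left[symmetric] S1)
    have hs2: "(\<Sum>j'<T. tau T m b k kk * (if l < j' then 1 else 0)) = tau T m b k kk * (real T - 1 - real l)"
      using assms by (simp add: sum_distrib_left[symmetric] cnt_gt)
    show ?thesis unfolding sum.distrib hs1 hs2 by (simp add: field_simps)
  qed
  note hsum = this
  show ?thesis unfolding Qf_def hsum by (simp add: Uf_def field_simps)
qed

lemma tau_sum: assumes "k < m"
  shows "(\<Sum>kk<m. tau T m b k kk) = 1 / cconst T b + real m * dconst T m b / (cconst T b * gconst T m b)"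
  using assms by (simp add: tau_def sum.distrib)

lemma L1: assumes "j < T" "m \<ge> 1" "T \<ge> 2" "k < m" "cconst T b \<noteq> 0" "gconst T m b \<noteq> 0"
  shows "(\<Sum>kk<m. \<Sum>l<T - 1. Qf T m b k kk l j) = 0"
proof -
  have rT: "real (T - 1) = real T - 1" using assms by simp
  have inner: "(\<Sum>l<T - 1. Qf T m b k kk l j) = (real T - 1) * (- kap T m b * real j + b * kap T m b * real T * (real T - 1) / 2)
      + tau T m b k kk * (real j - b * real T * (real T - 1) / 2)" for kk
  proof -
    have "(\<Sum>l<T - 1. Qf T m b k kk l j) = (\<Sum>l<T - 1. (- kap T m b * real j + b * kap T m b * real T * (real T - 1) / 2 - b * tau T m b k kk * (real T - 1))
        + tau T m b k kk * (if l < j then 1 else 0) + (b * tau T m b k kk) * real l)"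
      by (rule sum.cong) (auto simp: Qf_closed algebra_simps)
    also have "\<dots> = (real T - 1) * (- kap T m b * real j + b * kap T m b * real T * (real T - 1) / 2 - b * tau T m b k kk * (real T - 1))
       + tau T m b k kk * real j + (b * tau T m b k kk) * ((real T - 1) * (real T - 2) / 2)"
      using assms by (simp add: sum.distrib sum_distrib_left[symmetric] S1 cnt_lt rT)
    also have "\<dots> = (real T - 1) * (- kap T m b * real j + b * kap T m b * real T * (real T - 1) / 2)
      + tau T m b k kk * (real j - b * real T * (real T - 1) / 2)"
      by (simp add: field_simps)
    finally show ?thesis .
  qed
  have m0: "real m \<noteq> 0" "real T - 1 \<noteq> 0" using assms by auto
  have key: "1 / cconst T b + real m * dconst T m b / (cconst T b * gconst T m b) = real m * (real T - 1) * kap T m b"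
  proof -
    have g: "gconst T m b = cconst T b - real m * dconst T m b" by (simp add: gconst_def)
    have "1 / cconst T b + real m * dconst T m b / (cconst T b * gconst T m b) = 1 / gconst T m b"
      using assms by (simp add: field_simps g)
    also have "\<dots> = real m * (real T - 1) * kap T m b" using m0 assms by (simp add: kap_def)
    finally show ?thesis .
  qed
  have "(\<Sum>kk<m. \<Sum>l<T - 1. Qf T m b k kk l j) = real m * ((real T - 1) * (- kap T m b * real j + b * kap T m b * real T * (real T - 1) / 2))
      + (\<Sum>kk<m. tau T m b k kk) * (real j - b * real T * (real T - 1) / 2)"
    unfolding inner by (simp add: sum.distrib sum_distrib_right[symmetric])
  also have "\<dots> = 0" unfolding tau_sum[OF assms(4)] key by (simp add: field_simps)
  finally show ?thesis .
qed


lemma sum_lin: "(\<Sum>j<n. p0 + p1 * real j) = real n * p0 + p1 * (real n * (real n - 1) / 2)"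
  by (simp add: sum.distrib sum_distrib_left[symmetric] S1)

lemma sum_quad: "(\<Sum>j<n. p0 + p1 * real j + p2 * real j ^ 2) =
   real n * p0 + p1 * (real n * (real n - 1) / 2) + p2 * ((real n - 1) * real n * (2 * real n - 1) / 6)"
  by (simp add: sum.distrib sum_distrib_left[symmetric] S1 S2)

lemma L2: assumes "m \<ge> 1" "T \<ge> 2" "k < m" "cconst T b \<noteq> 0" "gconst T m b \<noteq> 0"
  shows "(\<Sum>l<T - 1. \<Sum>j<T. if l < j then Qf T m b k kk l j else 0) = (if kk = k then 1 else 0)"
proof -
  define \<kappa> where "\<kappa> = kap T m b"
  define \<tau> where "\<tau> = tau T m b k kk"
  define E where "E = \<tau> + b * \<kappa> * real T * (real T - 1) / 2 - b * \<tau> * (real T - 1)"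
  have rT: "real (T - 1) = real T - 1" using assms by simp
  have inner: "(\<Sum>j<T. if l < j then Qf T m b k kk l j else 0) =
     (- \<kappa> * real T * (real T - 1) / 2 + (real T - 1) * E) + (\<kappa> / 2 - E + b * \<tau> * (real T - 1)) * real l
     + (\<kappa> / 2 - b * \<tau>) * real l ^ 2" if "l < T - 1" for l
  proof -
    have "(\<Sum>j<T. if l < j then Qf T m b k kk l j else 0) = (\<Sum>j<T. if l < j then (E + b * \<tau> * real l) + (- \<kappa>) * real j else 0)"
      using that by (intro sum.cong) (auto simp: Qf_closed E_def \<kappa>_def \<tau>_def)
    also have "\<dots> = (\<Sum>j<T. (E + b * \<tau> * real l) + (- \<kappa>) * real j) - (\<Sum>j<Suc l. (E + b * \<tau> * real l) + (- \<kappa>) * real j)"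
      using that by (intro split_gt) simp
    also have "\<dots> = (- \<kappa> * real T * (real T - 1) / 2 + (real T - 1) * E) + (\<kappa> / 2 - E + b * \<tau> * (real T - 1)) * real l
     + (\<kappa> / 2 - b * \<tau>) * real l ^ 2"
      unfolding sum_lin by (simp add: field_simps power2_eq_square)
    finally show ?thesis .
  qed
  have "(\<Sum>l<T - 1. \<Sum>j<T. if l < j then Qf T m b k kk l j else 0) =
     (\<Sum>l<T - 1. (- \<kappa> * real T * (real T - 1) / 2 + (real T - 1) * E) + (\<kappa> / 2 - E + b * \<tau> * (real T - 1)) * real l
     + (\<kappa> / 2 - b * \<tau>) * real l ^ 2)"
    by (intro sum.cong) (auto simp: inner)
  also have "\<dots> = \<tau> * cconst T b - \<kappa> * (real T * (real T - 1) * (2 * real T - 1) / 6 - b * real T ^ 2 * (real T - 1) ^ 2 / 4)"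
    unfolding sum_quad rT E_def cconst_def by (simp add: field_simps power2_eq_square)
  also have "\<dots> = (if kk = k then 1 else 0)"
  proof -
    have m0: "real m \<noteq> 0" "real T - 1 \<noteq> 0" using assms by auto
    have "\<kappa> * (real T * (real T - 1) * (2 * real T - 1) / 6 - b * real T ^ 2 * (real T - 1) ^ 2 / 4)
        = dconst T m b / gconst T m b"
      unfolding \<kappa>_def kap_def dconst_def using m0 assms by (simp add: field_simps power2_eq_square)
    moreover have "\<tau> * cconst T b = (if kk = k then 1 else 0) + dconst T m b / gconst T m b"
      unfolding \<tau>_def tau_def using assms by (simp add: field_simps)
    ultimately show ?thesis by simp
  qed
  finally show ?thesis .
qed

lemma L3: assumes "m \<ge> 1" "T \<ge> 2" "k < m" "cconst T b \<noteq> 0" "gconst T m b \<noteq> 0" "e < T - 1"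
  shows "(\<Sum>l<T - 1. if l + e + 1 < T then Qf T m b k kk l (l + e + 1) else 0) =
     (1 / cconst T b) * ((if kk = k then 1 else 0) + dconst T m b / gconst T m b) * rvec T b (e + 1)
     - (1 / gconst T m b) * vvec T m b (e + 1)"
proof -
  define \<kappa> where "\<kappa> = kap T m b"
  define \<tau> where "\<tau> = tau T m b k kk"
  define E where "E = \<tau> + b * \<kappa> * real T * (real T - 1) / 2 - b * \<tau> * (real T - 1)"
  define M where "M = T - 1 - e"
  have rM: "real M = real T - 1 - real e" using assms unfolding M_def by simp
  have mn: "min (T - 1) (T - Suc e) = M" unfolding M_def by simp
  have "(\<Sum>l<T - 1. if l + e + 1 < T then Qf T m b k kk l (l + e + 1) else 0)
     = (\<Sum>l<M. Qf T m b k kk l (l + e + 1))"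
    unfolding shift_lt mn ..
  also have "\<dots> = (\<Sum>l<M. (E - \<kappa> * (real e + 1)) + (b * \<tau> - \<kappa>) * real l)"
    by (intro sum.cong) (auto simp: Qf_closed E_def \<kappa>_def \<tau>_def M_def algebra_simps)
  also have "\<dots> = \<tau> * rvec T b (e + 1) + \<kappa> * real M * (b * real T * (real T - 1) - (real T + real e)) / 2"
    unfolding sum_lin rM E_def rvec_def by (simp add: field_simps)
  also have "\<dots> = (1 / cconst T b) * ((if kk = k then 1 else 0) + dconst T m b / gconst T m b) * rvec T b (e + 1)
     - (1 / gconst T m b) * vvec T m b (e + 1)"
  proof -
    have m0: "real m \<noteq> 0" "real T - 1 \<noteq> 0" using assms by auto
    have "\<kappa> * real M * (b * real T * (real T - 1) - (real T + real e)) / 2 = - (1 / gconst T m b) * vvec T m b (e + 1)"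
      unfolding \<kappa>_def kap_def vvec_def rM using m0 assms by (simp add: field_simps)
    moreover have "\<tau> = (1 / cconst T b) * ((if kk = k then 1 else 0) + dconst T m b / gconst T m b)"
      unfolding \<tau>_def tau_def using assms by (simp add: field_simps)
    ultimately show ?thesis by simp
  qed
  finally show ?thesis .
qed

lemma mat_inv_eq:
  assumes A: "A \<in> carrier_mat N N" and B: "B \<in> carrier_mat N N"
    and AB: "A * B = 1\<^sub>m N" and BA: "B * A = 1\<^sub>m N"
  shows "mat_inv A = B"
proof -
  let ?P = "\<lambda>B'. B' \<in> carrier_mat (dim_row A) (dim_row A) \<and> A * B' = 1\<^sub>m (dim_row A) \<and> B' * A = 1\<^sub>m (dim_row A)"
  have dA: "dim_row A = N" using A by auto
  have "?P B" using B AB BA dA by auto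
  then have P: "?P (mat_inv A)" unfolding mat_inv_def by (rule someI)
  then have C: "mat_inv A \<in> carrier_mat N N" "mat_inv A * A = 1\<^sub>m N" using dA by auto
  have "mat_inv A = mat_inv A * (A * B)" using AB C by simp
  also have "\<dots> = (mat_inv A * A) * B" using C A B by (simp add: assoc_mult_mat[symmetric])
  also have "\<dots> = B" using C B by simp
  finally show ?thesis .
qed

lemma mat_inv_props:
  assumes "invertible_mat A" "A \<in> carrier_mat N N"
  shows "mat_inv A \<in> carrier_mat N N" "A * mat_inv A = 1\<^sub>m N" "mat_inv A * A = 1\<^sub>m N"
proof -
  obtain B where B: "A * B = 1\<^sub>m (dim_row A)" "B * A = 1\<^sub>m (dim_row B)"
    using assms(1) unfolding invertible_mat_def inverts_mat_def by auto
  have dA: "dim_row A = N" "dim_col A = N" using assms(2) by auto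
  have "dim_col B = N" using arg_cong[OF B(1), of dim_col] dA by simp
  moreover have "dim_row B = N" using arg_cong[OF B(2), of dim_col] dA by simp
  ultimately have Bc: "B \<in> carrier_mat N N" by auto
  have "B * A = 1\<^sub>m N" using B(2) Bc by auto
  then have "mat_inv A = B" using mat_inv_eq[OF assms(2) Bc] B(1) dA by auto
  then show "mat_inv A \<in> carrier_mat N N" "A * mat_inv A = 1\<^sub>m N" "mat_inv A * A = 1\<^sub>m N"
    using Bc B dA \<open>B * A = 1\<^sub>m N\<close> by auto
qed

lemma inv_row:
  fixes M Mi :: "real mat"
  assumes M: "M \<in> carrier_mat N N" and Mi: "Mi \<in> carrier_mat N N"
    and sym: "\<And>a a'. a < N \<Longrightarrow> a' < N \<Longrightarrow> M $$ (a, a') = M $$ (a', a)"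
    and MMi: "M * Mi = 1\<^sub>m N" and MiM: "Mi * M = 1\<^sub>m N"
    and w: "w \<in> carrier_vec N" and Mw: "M *\<^sub>v w = unit_vec N r" and r: "r < N" and a: "a < N"
  shows "Mi $$ (r, a) = w $ a"
proof -
  have tM: "transpose_mat M = M" using M sym by (intro eq_matI) auto
  have "transpose_mat Mi * M = transpose_mat (transpose_mat M * Mi)"
    using M Mi by (simp add: transpose_mult[of _ N N _ N])
  also have "\<dots> = 1\<^sub>m N" using tM MMi by simp
  finally have tMiM: "transpose_mat Mi * M = 1\<^sub>m N" .
  have "transpose_mat Mi = transpose_mat Mi * (M * Mi)" using MMi Mi by simp
  also have "\<dots> = (transpose_mat Mi * M) * Mi" using M Mi by (intro assoc_mult_mat[symmetric, of _ N N _ N _ N]) auto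
  also have "\<dots> = Mi" using tMiM Mi by simp
  finally have tMi: "transpose_mat Mi = Mi" .
  have "Mi $$ (r, a) = transpose_mat Mi $$ (a, r)" using Mi r a by simp
  also have "\<dots> = Mi $$ (a, r)" using tMi by simp
  also have "\<dots> = (Mi *\<^sub>v unit_vec N r) $ a" using Mi r a by (simp add: row_def)
  also have "\<dots> = (Mi *\<^sub>v (M *\<^sub>v w)) $ a" using Mw by simp
  also have "\<dots> = ((Mi * M) *\<^sub>v w) $ a" using Mi M w by simp
  also have "\<dots> = w $ a" using MiM w by simp
  finally show ?thesis .
qed

lemma triple_entry:
  fixes A S :: "real mat"
  assumes A: "A \<in> carrier_mat T N" and S: "S \<in> carrier_mat T T" and a: "a < N" and a': "a' < N"
  shows "(transpose_mat A * S * A) $$ (a, a') = (\<Sum>j<T. \<Sum>j'<T. A $$ (j, a) * S $$ (j, j') * A $$ (j', a'))"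
proof -
  have "(transpose_mat A * S * A) $$ (a, a') = (\<Sum>j<T. A $$ (j, a) * (\<Sum>j'<T. S $$ (j, j') * A $$ (j', a')))"
    using A S a a' by (simp add: scalar_prod_def atLeast0LessThan)
  also have "\<dots> = (\<Sum>j<T. \<Sum>j'<T. A $$ (j, a) * S $$ (j, j') * A $$ (j', a'))"
    by (simp add: sum_distrib_left mult.assoc)
  finally show ?thesis .
qed

lemma vec_entry:
  fixes A S :: "real mat"
  assumes A: "A \<in> carrier_mat T N" and S: "S \<in> carrier_mat T T" and y: "dim_vec y = T" and a: "a < N"
  shows "(transpose_mat A *\<^sub>v (S *\<^sub>v y)) $ a = (\<Sum>j<T. A $$ (j, a) * (\<Sum>j'<T. S $$ (j, j') * y $ j'))"
  using A S y a by (simp add: scalar_prod_def atLeast0LessThan)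

lemma reindex_clusters:
  fixes f :: "nat \<Rightarrow> real" and m K :: nat
  assumes "K > 0"
  shows "(\<Sum>i\<in>{1..m * K}. f i) = (\<Sum>kk<m. \<Sum>l<K. (f (kk * K + l + 1) :: real))"
proof -
  let ?g = "\<lambda>(kk, l). kk * K + l + 1"
  have dm: "kk = kk' \<and> l = l'" if "kk * K + l = kk' * K + l'" "l < K" "l' < K" for kk l kk' l'
  proof -
    have "kk = (kk * K + l) div K" "l = (kk * K + l) mod K" using that(2) by simp_all
    moreover have "kk' = (kk' * K + l') div K" "l' = (kk' * K + l') mod K" using that(3) by simp_all
    ultimately show ?thesis using that(1) by metis
  qed
  have inj: "inj_on ?g ({..<m} \<times> {..<K})"
  proof (rule inj_onI)
    fix p q assume p: "p \<in> {..<m} \<times> {..<K}" and q: "q \<in> {..<m} \<times> {..<K}" and e: "?g p = ?g q"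
    obtain kk l where pp: "p = (kk, l)" by (cases p)
    obtain kk' l' where qq: "q = (kk', l')" by (cases q)
    have "kk * K + l = kk' * K + l'" using e unfolding pp qq by simp
    moreover have "l < K" "l' < K" using p q unfolding pp qq by auto
    ultimately have "kk = kk' \<and> l = l'" by (rule dm)
    then show "p = q" unfolding pp qq by simp
  qed
  have img: "?g ` ({..<m} \<times> {..<K}) = {1..m * K}"
  proof
    show "?g ` ({..<m} \<times> {..<K}) \<subseteq> {1..m * K}"
    proof
      fix x assume "x \<in> ?g ` ({..<m} \<times> {..<K})"
      then obtain kk l where kl: "kk < m" "l < K" "x = kk * K + l + 1" by auto
      then have "kk + 1 \<le> m" by auto
      then have "(kk + 1) * K \<le> m * K" by (rule mult_right_mono) simp
      then show "x \<in> {1..m * K}" using kl by auto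
    qed
  next
    show "{1..m * K} \<subseteq> ?g ` ({..<m} \<times> {..<K})"
    proof
      fix i assume i: "i \<in> {1..m * K}"
      let ?kk = "(i - 1) div K" and ?l = "(i - 1) mod K"
      have "?kk < m" using i assms by (auto simp: div_less_iff_less_mult)
      moreover have "?l < K" using assms by auto
      moreover have "i = ?kk * K + ?l + 1" using i by simp
      ultimately show "i \<in> ?g ` ({..<m} \<times> {..<K})" by force
    qed
  qed
  have "(\<Sum>i\<in>{1..m * K}. f i) = (\<Sum>p\<in>{..<m} \<times> {..<K}. f (?g p))"
    by (subst img[symmetric], rule sum.reindex[OF inj, unfolded comp_def])
  also have "\<dots> = (\<Sum>kk<m. \<Sum>l<K. f (kk * K + l + 1))"
    by (simp add: sum.cartesian_product split_def)
  finally show ?thesis .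
qed

lemma xind_clK:
  assumes "l < K" "T - 1 = K"
  shows "xind T (k' + 1) (kk * K + l + 1) jj = (if k' = kk \<and> l + 1 < jj then 1 else 0)"
proof -
  let ?K = "K"
  have "(k' * ?K < kk * ?K + l + 1 \<and> kk * ?K + l + 1 \<le> (k' + 1) * ?K) \<longleftrightarrow> k' = kk"
  proof
    assume h: "k' * ?K < kk * ?K + l + 1 \<and> kk * ?K + l + 1 \<le> (k' + 1) * ?K"
    show "k' = kk"
    proof (rule ccontr)
      assume "k' \<noteq> kk"
      then consider "k' + 1 \<le> kk" | "kk + 1 \<le> k'" by linarith
      then show False
      proof cases
        case 1
        then have "(k' + 1) * ?K \<le> kk * ?K" by (rule mult_right_mono) simp
        then show False using h by linarith
      next
        case 2
        then have "(kk + 1) * ?K \<le> k' * ?K" by (rule mult_right_mono) simp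
        then show False using h assms by (simp add: algebra_simps)
      qed
    qed
  next
    assume "k' = kk" then show "k' * ?K < kk * ?K + l + 1 \<and> kk * ?K + l + 1 \<le> (k' + 1) * ?K"
      using assms by (simp add: algebra_simps)
  qed
  then show ?thesis unfolding xind_def assms(2) by auto
qed

lemma xind_cl:
  assumes "l < T - 1"
  shows "xind T (k' + 1) (kk * (T - 1) + l + 1) jj = (if k' = kk \<and> l + 1 < jj then 1 else 0)"
  using xind_clK[OF assms refl] .

lemma expo_cl:
  assumes "l < T - 1"
  shows "expo T (k'' + 1) (kk * (T - 1) + l + 1) (j + 1) = (if k'' = kk then j - l else 0)"
proof -
  have "expo T (k'' + 1) (kk * (T - 1) + l + 1) (j + 1) = (\<Sum>j'\<in>{1..j+1}. if k'' = kk \<and> l + 1 < j' then 1 else 0)"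
    unfolding expo_def using xind_cl[OF assms] by simp
  also have "\<dots> = (if k'' = kk then j - l else 0)"
  proof (cases "k'' = kk")
    case True
    have e: "{j'\<in>{1..j+1}. l + 1 < j'} = {l+2..j+1}" by auto
    have "(\<Sum>j'\<in>{1..j+1}. if l + 1 < j' then 1 else 0) = (\<Sum>j'\<in>{j'\<in>{1..j+1}. l + 1 < j'}. (1::nat))"
      by (rule sum.inter_filter[symmetric]) simp
    then have "(\<Sum>j'\<in>{1..j+1}. if l + 1 < j' then 1 else 0) = card {l+2..j+1}"
      unfolding e by simp
    then show ?thesis using True by simp
  qed simp
  finally show ?thesis .
qed

lemma Dmat_cl:
  assumes "l < T - 1" "j < T" "a < T + m"
  shows "Dmat T m (kk * (T - 1) + l + 1) $$ (j, a) =
    (if a < T then (if j = a then 1 else 0) else (if a - T = kk \<and> l < j then 1 else 0))"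
proof -
  have "a - T + 1 = (a - T) + 1" by simp
  show ?thesis using assms unfolding Dmat_def Xmat_def
    using xind_cl[OF assms(1), of "a - T" kk "j + 1"] by auto
qed

lemma Zmat_cl:
  assumes "l < T - 1" "j < T" "c < m * (T - 1)"
  shows "Zmat T m (kk * (T - 1) + l + 1) $$ (j, c) =
    (if c div (T - 1) = kk \<and> j = l + c mod (T - 1) + 1 then 1 else 0)"
proof -
  have "Zmat T m (kk * (T - 1) + l + 1) $$ (j, c) =
     (if expo T (c div (T - 1) + 1) (kk * (T - 1) + l + 1) (j + 1) = c mod (T - 1) + 1 then 1 else 0)"
    using assms unfolding Zmat_def by simp
  also have "\<dots> = (if c div (T - 1) = kk \<and> j = l + c mod (T - 1) + 1 then 1 else 0)"
    unfolding expo_cl[OF assms(1)] by auto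
  finally show ?thesis .
qed

definition Si :: "nat \<Rightarrow> real \<Rightarrow> real \<Rightarrow> real mat" where
  "Si T b s = mat T T (\<lambda>(j, j'). ((if j = j' then 1 else 0) - b) / s)"

lemma Sigma_inv:
  assumes "n \<ge> 1" "se2 > 0" "sa2 \<ge> 0"
  shows "mat_inv (Sigma T n sa2 se2) = Si T (bconst T n sa2 se2) (se2 / real n)"
proof -
  define s where "s = se2 / real n"
  define b where "b = bconst T n sa2 se2"
  have s0: "s > 0" using assms unfolding s_def by simp
  have den: "real T * sa2 + s > 0" using s0 assms by (simp add: add_nonneg_pos)
  have den': "s + sa2 * real T \<noteq> 0" using den by (simp add: algebra_simps)
  have bd: "b = sa2 / (real T * sa2 + s)" unfolding b_def bconst_def s_def by simp
  have "1 - real T * b = s / (real T * sa2 + s)" unfolding bd using den by (simp add: field_simps)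
  then have bs: "sa2 * (1 - real T * b) / s - b = 0" unfolding bd using s0 by simp
  have Sg: "Sigma T n sa2 se2 = mat T T (\<lambda>(j, j'). sa2 + (if j = j' then s else 0))"
    unfolding Sigma_def s_def by (intro eq_matI) auto
  have e1: "(\<Sum>i<T. (sa2 + (if j = i then s else 0)) * ((if i = j'' then 1 else 0) - b) / s)
      = (if j = j'' then 1 else 0)" if "j < T" "j'' < T" for j j''
  proof -
    have "(\<Sum>i<T. (sa2 + (if j = i then s else 0)) * ((if i = j'' then 1 else 0) - b) / s)
       = (\<Sum>i<T. sa2 / s * (if i = j'' then 1 else 0) - sa2 * b / s) + (\<Sum>i<T. (if j = i then ((if i = j'' then 1 else 0) - b) else 0))"
      unfolding sum.distrib[symmetric] using s0 by (intro sum.cong) (auto simp: field_simps)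
    also have "\<dots> = sa2 / s - real T * sa2 * b / s + ((if j = j'' then 1 else 0) - b)"
    proof -
      have "(\<Sum>i<T. sa2 / s * (if i = j'' then 1 else 0)) = (\<Sum>i<T. if i = j'' then sa2 / s else 0)"
        by (intro sum.cong) auto
      also have "\<dots> = sa2 / s" using that by simp
      finally have d: "(\<Sum>i<T. sa2 / s * (if i = j'' then 1 else 0)) = sa2 / s" .
      show ?thesis unfolding sum_subtractf d using that by simp
    qed
    also have "\<dots> = (sa2 * (1 - real T * b) / s - b) + (if j = j'' then 1 else 0)"
      using s0 by (simp add: field_simps)
    finally show ?thesis using bs by simp
  qed
  have e2: "(\<Sum>i<T. ((if j = i then 1 else 0) - b) * (sa2 + (if i = j'' then s else 0)) / s)
      = (if j = j'' then 1 else 0)" if "j < T" "j'' < T" for j j''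
  proof -
    have "(\<Sum>i<T. ((if j = i then 1 else 0) - b) * (sa2 + (if i = j'' then s else 0)) / s)
       = (\<Sum>i<T. (sa2 + (if j'' = i then s else 0)) * ((if i = j then 1 else 0) - b) / s)"
      by (intro sum.cong) auto
    also have "\<dots> = (if j'' = j then 1 else 0)" using e1 that by simp
    finally show ?thesis by auto
  qed
  have "mat_inv (mat T T (\<lambda>(j, j'). sa2 + (if j = j' then s else 0))) = Si T b s"
  proof (rule mat_inv_eq)
    show "mat T T (\<lambda>(j, j'). sa2 + (if j = j' then s else 0)) * Si T b s = 1\<^sub>m T"
      by (intro eq_matI) (auto simp: Si_def scalar_prod_def atLeast0LessThan e1)
    show "Si T b s * mat T T (\<lambda>(j, j'). sa2 + (if j = j' then s else 0)) = 1\<^sub>m T"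
      by (intro eq_matI) (auto simp: Si_def scalar_prod_def atLeast0LessThan e2)
  qed (auto simp: Si_def)
  then show ?thesis unfolding Sg b_def s_def .
qed


definition clu :: "nat \<Rightarrow> nat \<Rightarrow> nat \<Rightarrow> nat" where
  "clu T kk l = kk * (T - 1) + l + 1"

lemma reindex_clu:
  fixes f :: "nat \<Rightarrow> real"
  assumes "T - 1 > 0"
  shows "(\<Sum>i\<in>{1..m * (T - 1)}. f i) = (\<Sum>kk<m. \<Sum>l<T - 1. f (clu T kk l))"
  unfolding clu_def by (rule reindex_clusters[OF assms])

lemma Dmat_clu:
  assumes "l < T - 1" "j < T" "a < T + m"
  shows "Dmat T m (clu T kk l) $$ (j, a) =
    (if a < T then (if j = a then 1 else 0) else (if a - T = kk \<and> l < j then 1 else 0))"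
  unfolding clu_def by (rule Dmat_cl[OF assms])

lemma Zmat_clu:
  assumes "l < T - 1" "j < T" "c < m * (T - 1)"
  shows "Zmat T m (clu T kk l) $$ (j, c) =
    (if c div (T - 1) = kk \<and> j = l + c mod (T - 1) + 1 then 1 else 0)"
  unfolding clu_def by (rule Zmat_cl[OF assms])

lemma sum_split_N: fixes T m :: nat shows "(\<Sum>a<T + m. f a) = (\<Sum>a<T. f a) + (\<Sum>a'<m. (f (T + a') :: real))"
  by (induction m) (auto simp: add_Suc_right)

lemma sum_rearr1:
  fixes X :: "nat \<Rightarrow> nat \<Rightarrow> real"
  shows "(\<Sum>a'<N. (\<Sum>i\<in>A. \<Sum>j<T. \<Sum>j'<T. X i j * Y j j' * Z i j' a') * w a')
     = (\<Sum>i\<in>A. \<Sum>j<T. X i j * (\<Sum>j'<T. Y j j' * (\<Sum>a'<N. Z i j' a' * w a')))"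
proof -
  have "(\<Sum>a'<N. (\<Sum>i\<in>A. \<Sum>j<T. \<Sum>j'<T. X i j * Y j j' * Z i j' a') * w a')
      = (\<Sum>a'<N. \<Sum>i\<in>A. \<Sum>j<T. \<Sum>j'<T. X i j * Y j j' * Z i j' a' * w a')"
    by (simp add: sum_distrib_right)
  also have "\<dots> = (\<Sum>i\<in>A. \<Sum>a'<N. \<Sum>j<T. \<Sum>j'<T. X i j * Y j j' * Z i j' a' * w a')"
    by (rule sum.swap)
  also have "\<dots> = (\<Sum>i\<in>A. \<Sum>j<T. \<Sum>a'<N. \<Sum>j'<T. X i j * Y j j' * Z i j' a' * w a')"
    by (intro sum.cong refl sum.swap)
  also have "\<dots> = (\<Sum>i\<in>A. \<Sum>j<T. \<Sum>j'<T. \<Sum>a'<N. X i j * Y j j' * Z i j' a' * w a')"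
    by (intro sum.cong refl sum.swap)
  also have "\<dots> = (\<Sum>i\<in>A. \<Sum>j<T. X i j * (\<Sum>j'<T. Y j j' * (\<Sum>a'<N. Z i j' a' * w a')))"
    by (simp add: sum_distrib_left mult.assoc)
  finally show ?thesis .
qed

lemma sum_rearr2:
  fixes X :: "nat \<Rightarrow> nat \<Rightarrow> nat \<Rightarrow> real"
  shows "(\<Sum>a<N. w a * (\<Sum>i\<in>A. \<Sum>j<T. X i j a * (\<Sum>j'<T. Y j j' * y i j')))
     = (\<Sum>i\<in>A. \<Sum>j'<T. y i j' * (\<Sum>j<T. Y j j' * (\<Sum>a<N. X i j a * w a)))"
proof -
  have "(\<Sum>a<N. w a * (\<Sum>i\<in>A. \<Sum>j<T. X i j a * (\<Sum>j'<T. Y j j' * y i j')))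
      = (\<Sum>a<N. \<Sum>i\<in>A. \<Sum>j<T. \<Sum>j'<T. y i j' * Y j j' * X i j a * w a)"
    by (simp add: sum_distrib_left mult_ac)
  also have "\<dots> = (\<Sum>i\<in>A. \<Sum>a<N. \<Sum>j<T. \<Sum>j'<T. y i j' * Y j j' * X i j a * w a)"
    by (rule sum.swap)
  also have "\<dots> = (\<Sum>i\<in>A. \<Sum>j<T. \<Sum>a<N. \<Sum>j'<T. y i j' * Y j j' * X i j a * w a)"
    by (intro sum.cong refl sum.swap)
  also have "\<dots> = (\<Sum>i\<in>A. \<Sum>j<T. \<Sum>j'<T. \<Sum>a<N. y i j' * Y j j' * X i j a * w a)"
    by (intro sum.cong refl sum.swap)
  also have "\<dots> = (\<Sum>i\<in>A. \<Sum>j'<T. \<Sum>j<T. \<Sum>a<N. y i j' * Y j j' * X i j a * w a)"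
    by (intro sum.cong refl sum.swap)
  also have "\<dots> = (\<Sum>i\<in>A. \<Sum>j'<T. y i j' * (\<Sum>j<T. Y j j' * (\<Sum>a<N. X i j a * w a)))"
    by (simp add: sum_distrib_left mult.assoc)
  finally show ?thesis .
qed

lemma H_entry:
  assumes "k < m" "c < m * (T - 1)"
  shows "Hclaim T m b $$ (k, c) =
    (1 / cconst T b) * ((if c div (T - 1) = k then 1 else 0) + dconst T m b / gconst T m b) * rvec T b (c mod (T - 1) + 1)
    - (1 / gconst T m b) * vvec T m b (c mod (T - 1) + 1)"
proof -
  have K: "T - 1 > 0" using assms by (cases "T - 1") auto
  have cd: "c div (T - 1) < m" using div_less_iff_less_mult[OF K, of c m] assms(2) by simp
  have cm: "c mod (T - 1) < T - 1" using K by simp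
  show ?thesis
    unfolding Hclaim_def kron_def rrow_def vrow_def Jmat_def
    using assms cd cm by (simp add: ac_simps)
qed

lemma sum_rearr3:
  fixes Z :: "nat \<Rightarrow> nat \<Rightarrow> nat \<Rightarrow> nat \<Rightarrow> real"
  shows "(\<Sum>kk<m. \<Sum>l<K. \<Sum>j<T. (\<Sum>c<C. Z kk l j c * d c) * q kk l j)
    = (\<Sum>c<C. d c * (\<Sum>kk<m. \<Sum>l<K. \<Sum>j<T. Z kk l j c * q kk l j))"
proof -
  have "(\<Sum>kk<m. \<Sum>l<K. \<Sum>j<T. (\<Sum>c<C. Z kk l j c * d c) * q kk l j)
      = (\<Sum>kk<m. \<Sum>l<K. \<Sum>j<T. \<Sum>c<C. d c * (Z kk l j c * q kk l j))"
    by (simp add: sum_distrib_left sum_distrib_right mult_ac)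
  also have "\<dots> = (\<Sum>kk<m. \<Sum>l<K. \<Sum>c<C. \<Sum>j<T. d c * (Z kk l j c * q kk l j))"
    by (intro sum.cong refl sum.swap)
  also have "\<dots> = (\<Sum>kk<m. \<Sum>c<C. \<Sum>l<K. \<Sum>j<T. d c * (Z kk l j c * q kk l j))"
    by (intro sum.cong refl sum.swap)
  also have "\<dots> = (\<Sum>c<C. \<Sum>kk<m. \<Sum>l<K. \<Sum>j<T. d c * (Z kk l j c * q kk l j))"
    by (rule sum.swap)
  also have "\<dots> = (\<Sum>c<C. d c * (\<Sum>kk<m. \<Sum>l<K. \<Sum>j<T. Z kk l j c * q kk l j))"
    by (simp add: sum_distrib_left)
  finally show ?thesis .
qed


lemma sum_rearr4:
  fixes q :: "nat \<Rightarrow> nat \<Rightarrow> nat \<Rightarrow> real"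
  shows "(\<Sum>kk<m. \<Sum>l<K. \<Sum>j<T. (b j + z kk l j) * q kk l j) =
    (\<Sum>j<T. b j * (\<Sum>kk<m. \<Sum>l<K. q kk l j)) + (\<Sum>kk<m. \<Sum>l<K. \<Sum>j<T. z kk l j * q kk l j)"
proof -
  have "(\<Sum>kk<m. \<Sum>l<K. \<Sum>j<T. b j * q kk l j) = (\<Sum>kk<m. \<Sum>j<T. \<Sum>l<K. b j * q kk l j)"
    by (intro sum.cong refl sum.swap)
  also have "\<dots> = (\<Sum>j<T. \<Sum>kk<m. \<Sum>l<K. b j * q kk l j)"
    by (rule sum.swap)
  also have "\<dots> = (\<Sum>j<T. b j * (\<Sum>kk<m. \<Sum>l<K. q kk l j))"
    by (simp add: sum_distrib_left)
  finally have e: "(\<Sum>kk<m. \<Sum>l<K. \<Sum>j<T. b j * q kk l j) = (\<Sum>j<T. b j * (\<Sum>kk<m. \<Sum>l<K. q kk l j))" .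
  show ?thesis unfolding e[symmetric] by (simp add: distrib_right sum.distrib)
qed

lemma Hc: "Hclaim T m b \<in> carrier_mat m (m * (T - 1))"
  unfolding Hclaim_def kron_def Jmat_def rrow_def vrow_def by auto

lemma Z_sum:
  assumes "l < T - 1" "c < m * (T - 1)"
  shows "(\<Sum>j<T. Zmat T m (clu T kk l) $$ (j, c) * f j) =
    (if c div (T - 1) = kk then (if l + c mod (T - 1) + 1 < T then f (l + c mod (T - 1) + 1) else 0) else 0)"
proof -
  have "(\<Sum>j<T. Zmat T m (clu T kk l) $$ (j, c) * f j) =
     (\<Sum>j<T. if c div (T - 1) = kk then (if j = l + c mod (T - 1) + 1 then f j else 0) else 0)"
    using assms by (intro sum.cong refl) (simp add: Zmat_clu)
  then show ?thesis by simp
qed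

lemma g_eq: assumes "m \<ge> 1"
  shows "gconst T m b = real T * (real T - 2) * (2 + b - b * real T) / 12"
  using assms unfolding gconst_def cconst_def dconst_def by (simp add: field_simps)

context
  fixes T m n :: nat and sa2 se2 :: real and k :: nat
  assumes T3: "T \<ge> 3" and m1: "m \<ge> 1" and n1: "n \<ge> 1" and sa0: "sa2 \<ge> 0" and se0: "se2 > 0"
    and g2: "2 + bconst T n sa2 se2 - bconst T n sa2 se2 * real T \<noteq> 0"
    and c3: "3 + bconst T n sa2 se2 - 2 * bconst T n sa2 se2 * real T \<noteq> 0"
    and km: "k < m"
begin

definition "bb = bconst T n sa2 se2"
definition "ss = se2 / real n"
definition "ww = vec (T + m) (\<lambda>a. if a < T then ss * Uf T m bb a else ss * tau T m bb k (a - T))"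

lemma ss0: "ss > 0" using n1 se0 unfolding ss_def by simp

lemma c0: "cconst T bb \<noteq> 0"
  using T3 c3 unfolding cconst_def bb_def by simp

lemma g0: "gconst T m bb \<noteq> 0"
  using T3 g2 m1 unfolding g_eq[OF m1] bb_def by simp

lemma Dw:
  assumes "kk < m" "l < T - 1" "j < T"
  shows "(\<Sum>a<T + m. Dmat T m (clu T kk l) $$ (j, a) * ww $ a)
     = ss * (Uf T m bb j + tau T m bb k kk * (if l < j then 1 else 0))"
proof -
  have "(\<Sum>a<T + m. Dmat T m (clu T kk l) $$ (j, a) * ww $ a)
      = (\<Sum>a<T. (if j = a then ss * Uf T m bb a else 0)) + (\<Sum>a'<m. (if a' = kk then (if l < j then ss * tau T m bb k a' else 0) else 0))"
    unfolding sum_split_N using assms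
    by (intro arg_cong2[where f = "(+)"] sum.cong) (auto simp: Dmat_clu ww_def)
  also have "\<dots> = ss * (Uf T m bb j + tau T m bb k kk * (if l < j then 1 else 0))"
    using assms by (simp add: algebra_simps)
  finally show ?thesis .
qed

lemma Pq:
  assumes "kk < m" "l < T - 1" "j < T"
  shows "(\<Sum>j'<T. Si T bb ss $$ (j, j') * (\<Sum>a<T + m. Dmat T m (clu T kk l) $$ (j', a) * ww $ a))
     = Qf T m bb k kk l j"
proof -
  define V where "V j' = Uf T m bb j' + tau T m bb k kk * (if l < j' then 1 else 0)" for j'
  have "(\<Sum>j'<T. Si T bb ss $$ (j, j') * (\<Sum>a<T + m. Dmat T m (clu T kk l) $$ (j', a) * ww $ a))
     = (\<Sum>j'<T. ((if j = j' then 1 else 0) - bb) * V j')"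
  proof (intro sum.cong refl)
    fix j' assume "j' \<in> {..<T}"
    then have "(\<Sum>a<T + m. Dmat T m (clu T kk l) $$ (j', a) * ww $ a) = ss * V j'"
      using Dw[OF assms(1,2)] unfolding V_def by simp
    then show "Si T bb ss $$ (j, j') * (\<Sum>a<T + m. Dmat T m (clu T kk l) $$ (j', a) * ww $ a)
       = ((if j = j' then 1 else 0) - bb) * V j'"
      using ss0 assms \<open>j' \<in> {..<T}\<close> by (simp add: Si_def)
  qed
  also have "\<dots> = (\<Sum>j'<T. (if j = j' then 1 else 0) * V j') - bb * (\<Sum>j'<T. V j')"
    by (simp add: left_diff_distrib sum_subtractf sum_distrib_left)
  also have "\<dots> = V j - bb * (\<Sum>j'<T. V j')"
  proof -
    have "(\<Sum>j'<T. (if j = j' then 1 else 0) * V j') = (\<Sum>j'<T. (if j = j' then V j' else 0))"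
      by (intro sum.cong refl) auto
    then show ?thesis using assms by simp
  qed
  also have "\<dots> = Qf T m bb k kk l j"
    unfolding Qf_def V_def by simp
  finally show ?thesis .
qed

lemma Si_inv: "mat_inv (Sigma T n sa2 se2) = Si T bb ss"
  unfolding bb_def ss_def using Sigma_inv[OF n1 se0 sa0] .

lemma Dc: "Dmat T m i \<in> carrier_mat T (T + m)" unfolding Dmat_def by simp
lemma Sc: "Si T bb ss \<in> carrier_mat T T" unfolding Si_def by simp

lemma M_entry:
  assumes "a < T + m" "a' < T + m"
  shows "info_mat T m n sa2 se2 $$ (a, a') = (\<Sum>i\<in>{1..m * (T - 1)}. \<Sum>j<T. \<Sum>j'<T.
      Dmat T m i $$ (j, a) * Si T bb ss $$ (j, j') * Dmat T m i $$ (j', a'))"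
proof -
  have "info_mat T m n sa2 se2 $$ (a, a') = (\<Sum>i\<in>{1..m * (T - 1)}. (transpose_mat (Dmat T m i) * Si T bb ss * Dmat T m i) $$ (a, a'))"
    unfolding info_mat_def Si_inv using assms by (simp del: index_mult_mat)
  also have "\<dots> = (\<Sum>i\<in>{1..m * (T - 1)}. \<Sum>j<T. \<Sum>j'<T.
      Dmat T m i $$ (j, a) * Si T bb ss $$ (j, j') * Dmat T m i $$ (j', a'))"
    by (intro sum.cong refl triple_entry[OF Dc Sc] assms)
  finally show ?thesis .
qed

lemma M_sym:
  assumes "a < T + m" "a' < T + m"
  shows "info_mat T m n sa2 se2 $$ (a, a') = info_mat T m n sa2 se2 $$ (a', a)"
proof -
  have "(\<Sum>j<T. \<Sum>j'<T. Dmat T m i $$ (j, a) * Si T bb ss $$ (j, j') * Dmat T m i $$ (j', a'))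
      = (\<Sum>j<T. \<Sum>j'<T. Dmat T m i $$ (j, a') * Si T bb ss $$ (j, j') * Dmat T m i $$ (j', a))" for i
  proof -
    have "(\<Sum>j<T. \<Sum>j'<T. Dmat T m i $$ (j, a) * Si T bb ss $$ (j, j') * Dmat T m i $$ (j', a'))
       = (\<Sum>j'<T. \<Sum>j<T. Dmat T m i $$ (j, a) * Si T bb ss $$ (j, j') * Dmat T m i $$ (j', a'))"
      by (rule sum.swap)
    also have "\<dots> = (\<Sum>j'<T. \<Sum>j<T. Dmat T m i $$ (j', a') * Si T bb ss $$ (j', j) * Dmat T m i $$ (j, a))"
      by (intro sum.cong refl) (auto simp: Si_def)
    finally show ?thesis .
  qed
  then show ?thesis using assms by (simp add: M_entry)
qed

lemma Mc: "info_mat T m n sa2 se2 \<in> carrier_mat (T + m) (T + m)" unfolding info_mat_def by simp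

lemma wc: "ww \<in> carrier_vec (T + m)" unfolding ww_def by simp

lemma Kpos: "T - 1 > 0" using T3 by simp

lemma D_low:
  assumes "a < T" "kk < m" "l < T - 1"
  shows "(\<Sum>j<T. Dmat T m (clu T kk l) $$ (j, a) * f j) = f a"
proof -
  have "(\<Sum>j<T. Dmat T m (clu T kk l) $$ (j, a) * f j) = (\<Sum>j<T. if j = a then f j else 0)"
    using assms by (intro sum.cong refl) (simp add: Dmat_clu)
  then show ?thesis using assms by simp
qed

lemma D_high:
  assumes "k' < m" "kk < m" "l < T - 1"
  shows "(\<Sum>j<T. Dmat T m (clu T kk l) $$ (j, T + k') * f j) = (if kk = k' then (\<Sum>j<T. if l < j then f j else 0) else 0)"
proof -
  have "(\<Sum>j<T. Dmat T m (clu T kk l) $$ (j, T + k') * f j) = (\<Sum>j<T. if kk = k' then (if l < j then f j else 0) else 0)"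
    using assms by (intro sum.cong refl) (auto simp: Dmat_clu)
  then show ?thesis by simp
qed

lemma Mw_entry:
  assumes a: "a < T + m"
  shows "(info_mat T m n sa2 se2 *\<^sub>v ww) $ a =
     (\<Sum>kk<m. \<Sum>l<T - 1. \<Sum>j<T. Dmat T m (clu T kk l) $$ (j, a) * Qf T m bb k kk l j)"
proof -
  have "(info_mat T m n sa2 se2 *\<^sub>v ww) $ a = (\<Sum>a'<T + m. info_mat T m n sa2 se2 $$ (a, a') * ww $ a')"
    using a Mc wc by (simp add: scalar_prod_def atLeast0LessThan)
  also have "\<dots> = (\<Sum>a'<T + m. (\<Sum>i\<in>{1..m * (T - 1)}. \<Sum>j<T. \<Sum>j'<T.
      Dmat T m i $$ (j, a) * Si T bb ss $$ (j, j') * Dmat T m i $$ (j', a')) * ww $ a')"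
    using a by (intro sum.cong refl) (simp add: M_entry)
  also have "\<dots> = (\<Sum>i\<in>{1..m * (T - 1)}. \<Sum>j<T. Dmat T m i $$ (j, a) *
      (\<Sum>j'<T. Si T bb ss $$ (j, j') * (\<Sum>a'<T + m. Dmat T m i $$ (j', a') * ww $ a')))"
    by (rule sum_rearr1)
  also have "\<dots> = (\<Sum>kk<m. \<Sum>l<T - 1. \<Sum>j<T. Dmat T m (clu T kk l) $$ (j, a) *
      (\<Sum>j'<T. Si T bb ss $$ (j, j') * (\<Sum>a'<T + m. Dmat T m (clu T kk l) $$ (j', a') * ww $ a')))"
    by (rule reindex_clu[OF Kpos])
  also have "\<dots> = (\<Sum>kk<m. \<Sum>l<T - 1. \<Sum>j<T. Dmat T m (clu T kk l) $$ (j, a) * Qf T m bb k kk l j)"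
    by (intro sum.cong refl) (simp add: Pq)
  finally show ?thesis .
qed

lemma Mw: "info_mat T m n sa2 se2 *\<^sub>v ww = unit_vec (T + m) (T + k)"
proof (rule eq_vecI)
  show "dim_vec (info_mat T m n sa2 se2 *\<^sub>v ww) = dim_vec (unit_vec (T + m) (T + k))"
    using Mc by simp
  fix a assume "a < dim_vec (unit_vec (T + m) (T + k))"
  then have a: "a < T + m" by simp
  show "(info_mat T m n sa2 se2 *\<^sub>v ww) $ a = unit_vec (T + m) (T + k) $ a"
  proof (cases "a < T")
    case True
    have "(info_mat T m n sa2 se2 *\<^sub>v ww) $ a = (\<Sum>kk<m. \<Sum>l<T - 1. Qf T m bb k kk l a)"
      unfolding Mw_entry[OF a] using a True
      by (intro sum.cong refl) (simp add: D_low)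
    also have "\<dots> = 0" using L1[OF True m1 _ km c0 g0] T3 by simp
    finally show ?thesis using True a km by simp
  next
    case False
    define k' where "k' = a - T"
    have k': "k' < m" "a = T + k'" using a False unfolding k'_def by auto
    have "(info_mat T m n sa2 se2 *\<^sub>v ww) $ a = (\<Sum>kk<m. if kk = k' then (\<Sum>l<T - 1. \<Sum>j<T. if l < j then Qf T m bb k kk l j else 0) else 0)"
      unfolding Mw_entry[OF a] unfolding k'(2) using k'(1)
      by (intro sum.cong refl) (simp add: D_high)
    also have "\<dots> = (\<Sum>l<T - 1. \<Sum>j<T. if l < j then Qf T m bb k k' l j else 0)"
      using k' by simp
    also have "\<dots> = (if k' = k then 1 else 0)" using L2[OF m1 _ km c0 g0] T3 by simp
    finally show ?thesis using k' km by simp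
  qed
qed


lemma Pq':
  assumes "kk < m" "l < T - 1" "j' < T"
  shows "(\<Sum>j<T. Si T bb ss $$ (j, j') * (\<Sum>a<T + m. Dmat T m (clu T kk l) $$ (j, a) * ww $ a))
     = Qf T m bb k kk l j'"
proof -
  have "(\<Sum>j<T. Si T bb ss $$ (j, j') * (\<Sum>a<T + m. Dmat T m (clu T kk l) $$ (j, a) * ww $ a))
     = (\<Sum>j<T. Si T bb ss $$ (j', j) * (\<Sum>a<T + m. Dmat T m (clu T kk l) $$ (j, a) * ww $ a))"
    using assms by (intro sum.cong refl) (auto simp: Si_def)
  then show ?thesis using Pq[OF assms] by simp
qed

lemma theta_k:
  assumes inv: "invertible_mat (info_mat T m n sa2 se2)"
    and be: "\<beta> \<in> carrier_vec T" and de: "\<delta> \<in> carrier_vec (m * (T - 1))"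
  shows "theta_hat T m n sa2 se2 (\<lambda>i. \<beta> + Zmat T m i *\<^sub>v \<delta>) $ k = (Hclaim T m bb *\<^sub>v \<delta>) $ k"
proof -
  
  let ?M = "info_mat T m n sa2 se2"
  let ?Mi = "mat_inv ?M"
  define y where "y = (\<lambda>i. \<beta> + Zmat T m i *\<^sub>v \<delta>)"
  note Mi = mat_inv_props[OF inv Mc]
  have row: "?Mi $$ (T + k, a) = ww $ a" if "a < T + m" for a
    using inv_row[OF Mc Mi(1) M_sym Mi(2) Mi(3) wc Mw] km that by simp
  have ydim: "dim_vec (y i) = T" for i unfolding y_def by (simp add: Zmat_def)
  define Rv where "Rv = vec (T + m) (\<lambda>a. \<Sum>i\<in>{1..m * (T - 1)}. (transpose_mat (Dmat T m i) *\<^sub>v (Si T bb ss *\<^sub>v y i)) $ a)"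
  have gls: "gls_full T m n sa2 se2 y = ?Mi *\<^sub>v Rv" unfolding gls_full_def Rv_def Si_inv ..
  have "theta_hat T m n sa2 se2 y $ k = (?Mi *\<^sub>v Rv) $ (T + k)"
    unfolding theta_hat_def gls using km by simp
  also have "\<dots> = (\<Sum>a<T + m. ?Mi $$ (T + k, a) * Rv $ a)"
    using Mi(1) km by (simp add: scalar_prod_def atLeast0LessThan Rv_def)
  also have "\<dots> = (\<Sum>a<T + m. ww $ a * (\<Sum>i\<in>{1..m * (T - 1)}. \<Sum>j<T. Dmat T m i $$ (j, a) * (\<Sum>j'<T. Si T bb ss $$ (j, j') * y i $ j')))"
    by (intro sum.cong refl) (simp add: row Rv_def vec_entry[OF Dc Sc ydim])
  also have "\<dots> = (\<Sum>i\<in>{1..m * (T - 1)}. \<Sum>j'<T. y i $ j' * (\<Sum>j<T. Si T bb ss $$ (j, j') * (\<Sum>a<T + m. Dmat T m i $$ (j, a) * ww $ a)))"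
    by (rule sum_rearr2)
  also have "\<dots> = (\<Sum>kk<m. \<Sum>l<T - 1. \<Sum>j'<T. y (clu T kk l) $ j' * (\<Sum>j<T. Si T bb ss $$ (j, j') * (\<Sum>a<T + m. Dmat T m (clu T kk l) $$ (j, a) * ww $ a)))"
    by (rule reindex_clu[OF Kpos])
  also have "\<dots> = (\<Sum>kk<m. \<Sum>l<T - 1. \<Sum>j'<T. (\<beta> $ j' + (\<Sum>c<m * (T - 1). Zmat T m (clu T kk l) $$ (j', c) * \<delta> $ c)) * Qf T m bb k kk l j')"
    using be de by (intro sum.cong refl) (simp add: Pq' y_def Zmat_def scalar_prod_def atLeast0LessThan)
  also have "\<dots> = (\<Sum>j'<T. \<beta> $ j' * (\<Sum>kk<m. \<Sum>l<T - 1. Qf T m bb k kk l j'))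
      + (\<Sum>kk<m. \<Sum>l<T - 1. \<Sum>j'<T. (\<Sum>c<m * (T - 1). Zmat T m (clu T kk l) $$ (j', c) * \<delta> $ c) * Qf T m bb k kk l j')"
    by (rule sum_rearr4)
  also have "(\<Sum>j'<T. \<beta> $ j' * (\<Sum>kk<m. \<Sum>l<T - 1. Qf T m bb k kk l j')) = 0"
    using L1[OF _ m1 _ km c0 g0] T3 by simp
  also have "(\<Sum>kk<m. \<Sum>l<T - 1. \<Sum>j'<T. (\<Sum>c<m * (T - 1). Zmat T m (clu T kk l) $$ (j', c) * \<delta> $ c) * Qf T m bb k kk l j')
     = (\<Sum>c<m * (T - 1). \<delta> $ c * (\<Sum>kk<m. \<Sum>l<T - 1. \<Sum>j'<T. Zmat T m (clu T kk l) $$ (j', c) * Qf T m bb k kk l j'))"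
    by (rule sum_rearr3)
  also have "\<dots> = (\<Sum>c<m * (T - 1). \<delta> $ c * Hclaim T m bb $$ (k, c))"
  proof (intro sum.cong refl arg_cong2[where f = "(*)"])
    fix c assume "c \<in> {..<m * (T - 1)}"
    then have c: "c < m * (T - 1)" by simp
    have cd: "c div (T - 1) < m" using div_less_iff_less_mult[OF Kpos, of c m] c by simp
    have cm: "c mod (T - 1) < T - 1" using Kpos by simp
    have "(\<Sum>kk<m. \<Sum>l<T - 1. \<Sum>j'<T. Zmat T m (clu T kk l) $$ (j', c) * Qf T m bb k kk l j')
       = (\<Sum>kk<m. if c div (T - 1) = kk then (\<Sum>l<T - 1. if l + c mod (T - 1) + 1 < T then Qf T m bb k kk l (l + c mod (T - 1) + 1) else 0) else 0)"
      using c by (intro sum.cong refl) (simp add: Z_sum)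
    also have "\<dots> = (\<Sum>l<T - 1. if l + c mod (T - 1) + 1 < T then Qf T m bb k (c div (T - 1)) l (l + c mod (T - 1) + 1) else 0)"
      by (simp only: sum.delta'[OF finite_lessThan] lessThan_iff cd if_True)
    also have "\<dots> = Hclaim T m bb $$ (k, c)"
      unfolding H_entry[OF km c] using L3[OF m1 _ km c0 g0 cm, of "c div (T - 1)"] T3 by simp
    finally show "(\<Sum>kk<m. \<Sum>l<T - 1. \<Sum>j'<T. Zmat T m (clu T kk l) $$ (j', c) * Qf T m bb k kk l j') = Hclaim T m bb $$ (k, c)" .
  qed
  also have "0 + (\<Sum>c<m * (T - 1). \<delta> $ c * Hclaim T m bb $$ (k, c)) = (Hclaim T m bb *\<^sub>v \<delta>) $ k"
    using Hc[of T m bb] de km by (simp add: scalar_prod_def atLeast0LessThan mult.commute)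
  finally show ?thesis unfolding y_def .
qed


lemma theta_k':
  assumes inv: "invertible_mat (info_mat T m n sa2 se2)"
    and be: "\<beta> \<in> carrier_vec T" and de: "\<delta> \<in> carrier_vec (m * (T - 1))"
  shows "theta_hat T m n sa2 se2 (\<lambda>i. \<beta> + Zmat T m i *\<^sub>v \<delta>) $ k = (Hclaim T m (bconst T n sa2 se2) *\<^sub>v \<delta>) $ k"
  using theta_k[OF assms] unfolding bb_def .

lemma c0': "cconst T (bconst T n sa2 se2) \<noteq> 0" using c0 unfolding bb_def .
lemma g0': "gconst T m (bconst T n sa2 se2) \<noteq> 0" using g0 unfolding bb_def .

end

lemma reindex_c:
  fixes f :: "nat \<Rightarrow> real"
  shows "(\<Sum>c<m * K. f c) = (\<Sum>kk<m. \<Sum>e<K. f (kk * K + e))"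
proof (induction m)
  case (Suc m)
  have "(\<Sum>c<Suc m * K. f c) = (\<Sum>c<m * K + K. f c)" by (simp add: add.commute)
  also have "\<dots> = (\<Sum>c<m * K. f c) + (\<Sum>e<K. f (m * K + e))" by (rule sum_split_N)
  finally show ?case using Suc by simp
qed simp

lemma final_alg:
  fixes x :: "nat \<Rightarrow> nat \<Rightarrow> real"
  assumes "k < m" "cc \<noteq> 0" "g \<noteq> 0"
  shows "(\<Sum>kk<m. \<Sum>e<K. ((1 / cc) * ((if kk = k then 1 else 0) + d / g) * r e - (1 / g) * v e) * x kk e)
    = (1 / cc) * (\<Sum>e<K. r e * x k e) + (1 / g) * (\<Sum>e<K. (d / cc * r e - v e) * (\<Sum>kk<m. x kk e))"
proof -
  have "(\<Sum>kk<m. \<Sum>e<K. ((1 / cc) * ((if kk = k then 1 else 0) + d / g) * r e - (1 / g) * v e) * x kk e)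
     = (\<Sum>kk<m. \<Sum>e<K. (if kk = k then (1 / cc) * r e * x kk e else 0)) + (\<Sum>kk<m. \<Sum>e<K. (1 / g) * ((d / cc * r e - v e) * x kk e))"
    unfolding sum.distrib[symmetric] using assms by (intro sum.cong refl) (auto simp: field_simps)
  also have "(\<Sum>kk<m. \<Sum>e<K. (if kk = k then (1 / cc) * r e * x kk e else 0)) = (\<Sum>kk<m. if kk = k then (\<Sum>e<K. (1 / cc) * r e * x kk e) else 0)"
    by (intro sum.cong refl) auto
  also have "\<dots> = (1 / cc) * (\<Sum>e<K. r e * x k e)" using assms by (simp add: sum_distrib_left mult.assoc)
  also have "(\<Sum>kk<m. \<Sum>e<K. (1 / g) * ((d / cc * r e - v e) * x kk e)) = (\<Sum>e<K. \<Sum>kk<m. (1 / g) * ((d / cc * r e - v e) * x kk e))"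
    by (rule sum.swap)
  also have "\<dots> = (1 / g) * (\<Sum>e<K. (d / cc * r e - v e) * (\<Sum>kk<m. x kk e))"
    by (simp add: sum_distrib_left)
  finally show ?thesis .
qed


theorem proposition1:
  fixes T m n :: nat and sa2 se2 :: real
  assumes "T \<ge> 3" and "m \<ge> 1" and "n \<ge> 1"
    and "sa2 \<ge> 0" and "se2 > 0"
    and "2 + bconst T n sa2 se2 - bconst T n sa2 se2 * real T \<noteq> 0"
    and "3 + bconst T n sa2 se2 - 2 * bconst T n sa2 se2 * real T \<noteq> 0"
    and "invertible_mat (info_mat T m n sa2 se2)"
  shows "(\<forall>\<beta> \<delta>. \<beta> \<in> carrier_vec T \<longrightarrow> \<delta> \<in> carrier_vec (m * (T - 1)) \<longrightarrow>
            theta_hat T m n sa2 se2 (\<lambda>i. \<beta> + Zmat T m i *\<^sub>v \<delta>)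
              = Hclaim T m (bconst T n sa2 se2) *\<^sub>v \<delta>)
       \<and> (\<forall>\<beta> \<delta>. \<beta> \<in> carrier_vec T \<longrightarrow> \<delta> \<in> carrier_vec (m * (T - 1)) \<longrightarrow>
            (\<forall>k < m.
               theta_hat T m n sa2 se2 (\<lambda>i. \<beta> + Zmat T m i *\<^sub>v \<delta>) $ k
               = (let b = bconst T n sa2 se2; c = cconst T b; d = dconst T m b; g = gconst T m b
                  in (1 / c) * (\<Sum>e < T - 1. rvec T b (e + 1) * \<delta> $ (k * (T - 1) + e))
                     + (1 / g) * (\<Sum>e < T - 1. (d / c * rvec T b (e + 1) - vvec T m b (e + 1))
                                     * (\<Sum>k' < m. \<delta> $ (k' * (T - 1) + e))))))"
  proof -
  let ?b = "bconst T n sa2 se2"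
  have first: "theta_hat T m n sa2 se2 (\<lambda>i. \<beta> + Zmat T m i *\<^sub>v \<delta>) = Hclaim T m ?b *\<^sub>v \<delta>"
    if be: "\<beta> \<in> carrier_vec T" and de: "\<delta> \<in> carrier_vec (m * (T - 1))" for \<beta> \<delta>
  proof (rule eq_vecI)
    show "dim_vec (theta_hat T m n sa2 se2 (\<lambda>i. \<beta> + Zmat T m i *\<^sub>v \<delta>)) = dim_vec (Hclaim T m ?b *\<^sub>v \<delta>)"
      using Hc[of T m ?b] by (simp add: theta_hat_def)
    fix k assume "k < dim_vec (Hclaim T m ?b *\<^sub>v \<delta>)"
    then have k: "k < m" using Hc[of T m ?b] by simp
    show "theta_hat T m n sa2 se2 (\<lambda>i. \<beta> + Zmat T m i *\<^sub>v \<delta>) $ k = (Hclaim T m ?b *\<^sub>v \<delta>) $ k"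
      using theta_k'[OF assms(1-7) k assms(8) be de] .
  qed
  have second: "theta_hat T m n sa2 se2 (\<lambda>i. \<beta> + Zmat T m i *\<^sub>v \<delta>) $ k
       = (let b = bconst T n sa2 se2; c = cconst T b; d = dconst T m b; g = gconst T m b
          in (1 / c) * (\<Sum>e < T - 1. rvec T b (e + 1) * \<delta> $ (k * (T - 1) + e))
             + (1 / g) * (\<Sum>e < T - 1. (d / c * rvec T b (e + 1) - vvec T m b (e + 1))
                             * (\<Sum>k' < m. \<delta> $ (k' * (T - 1) + e))))"
    if be: "\<beta> \<in> carrier_vec T" and de: "\<delta> \<in> carrier_vec (m * (T - 1))" and k: "k < m" for \<beta> \<delta> k
  proof -
    have K: "T - 1 > 0" using assms(1) by simp
    have "theta_hat T m n sa2 se2 (\<lambda>i. \<beta> + Zmat T m i *\<^sub>v \<delta>) $ k = (Hclaim T m ?b *\<^sub>v \<delta>) $ k"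
      using first[OF be de] by simp
    also have "\<dots> = (\<Sum>c<m * (T - 1). Hclaim T m ?b $$ (k, c) * \<delta> $ c)"
      using Hc[of T m ?b] de k by (simp add: scalar_prod_def atLeast0LessThan)
    also have "\<dots> = (\<Sum>kk<m. \<Sum>e<T - 1. Hclaim T m ?b $$ (k, kk * (T - 1) + e) * \<delta> $ (kk * (T - 1) + e))"
      by (rule reindex_c)
    also have "\<dots> = (\<Sum>kk<m. \<Sum>e<T - 1. ((1 / cconst T ?b) * ((if kk = k then 1 else 0) + dconst T m ?b / gconst T m ?b) * rvec T ?b (e + 1)
        - (1 / gconst T m ?b) * vvec T m ?b (e + 1)) * \<delta> $ (kk * (T - 1) + e))"
    proof (intro sum.cong refl)
      fix kk e assume "kk \<in> {..<m}" "e \<in> {..<T - 1}"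
      then have kk: "kk < m" and e: "e < T - 1" by auto
      have "kk * (T - 1) + e < (kk + 1) * (T - 1)" using e by simp
      also have "\<dots> \<le> m * (T - 1)" using kk by (intro mult_right_mono) auto
      finally have c: "kk * (T - 1) + e < m * (T - 1)" .
      have dv: "(kk * (T - 1) + e) div (T - 1) = kk" "(kk * (T - 1) + e) mod (T - 1) = e" using e by auto
      show "Hclaim T m ?b $$ (k, kk * (T - 1) + e) * \<delta> $ (kk * (T - 1) + e) =
        ((1 / cconst T ?b) * ((if kk = k then 1 else 0) + dconst T m ?b / gconst T m ?b) * rvec T ?b (e + 1)
        - (1 / gconst T m ?b) * vvec T m ?b (e + 1)) * \<delta> $ (kk * (T - 1) + e)"
        unfolding H_entry[OF k c] dv by simp
    qed
    also have "\<dots> = (1 / cconst T ?b) * (\<Sum>e<T - 1. rvec T ?b (e + 1) * \<delta> $ (k * (T - 1) + e))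
       + (1 / gconst T m ?b) * (\<Sum>e<T - 1. (dconst T m ?b / cconst T ?b * rvec T ?b (e + 1) - vvec T m ?b (e + 1))
          * (\<Sum>kk<m. \<delta> $ (kk * (T - 1) + e)))"
      using c0'[OF assms(1-7) k] g0'[OF assms(1-7) k] by (rule final_alg[OF k])
    finally show ?thesis unfolding Let_def .
  qed
  show ?thesis using first second by blast
qed

end
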